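(* Let $d\ge1$, $\sigma>0$ and $\theta\in\mathbb{R}^d$ with $\|\theta\|_2^2\le\frac{5\sigma^2}{8}$. Let $V=(V_1,\dots,V_d)\sim\mathcal N(0,I_d)$ and define the $d\times d$ matrix $$F_\theta:=\mathbb{E}\left[\int_0^1\frac{VV^\top}{\big(\exp(-u\|\theta\|_2V_1/\sigma)+\exp(u\|\theta\|_2V_1/\sigma)\big)^2}\,du\right].$$ Then for all $j\in[d]$, $$[F_\theta]_{jj}\ge [F_\theta]_{11}\ge \frac{1}{4\big(1+2\|\theta\|_2^2/\sigma^2\big)}.$$ *)

theory Defs
  imports "HOL-Probability.Probability"
begin

definition std_normal_measure :: "real measure" where
  "std_normal_measure = density lborel (\<lambda>x. ennreal (std_normal_density x))"

text \<open>Law of V ~ N(0, I_d): coordinates indexed by {..<d}; index 0 plays the role of coordinate 1.\<close>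
definition gauss_d :: "nat \<Rightarrow> (nat \<Rightarrow> real) measure" where
  "gauss_d d = PiM {..<d} (\<lambda>_. std_normal_measure)"

definition norm_d :: "nat \<Rightarrow> (nat \<Rightarrow> real) \<Rightarrow> real" where
  "norm_d d \<theta> = sqrt (\<Sum>i<d. (\<theta> i)\<^sup>2)"

definition F_entry :: "nat \<Rightarrow> real \<Rightarrow> (nat \<Rightarrow> real) \<Rightarrow> nat \<Rightarrow> nat \<Rightarrow> real" where
  "F_entry d \<sigma> \<theta> j k =
     (\<integral>V. (LBINT u=0..1.
        V j * V k / (exp (- u * norm_d d \<theta> * V 0 / \<sigma>) + exp (u * norm_d d \<theta> * V 0 / \<sigma>))\<^sup>2)
      \<partial>gauss_d d)"

end

theory Submission
  imports Defs
begin


lemma tanh_le_self: fixes t :: real assumes "t \<ge> 0" shows "tanh t \<le> t"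
proof -
  have "(\<lambda>x. x - tanh x) 0 \<le> (\<lambda>x. x - tanh x) t"
  proof (rule DERIV_nonneg_imp_nondecreasing[OF assms])
    fix x :: real assume "0 \<le> x" "x \<le> t"
    have "cosh x \<noteq> 0" by (metis cosh_real_pos less_irrefl)
    then have "((\<lambda>x. x - tanh x) has_real_derivative 1 - (1 - tanh x ^ 2)) (at x)"
      by (intro derivative_eq_intros) auto
    then show "\<exists>y. ((\<lambda>x. x - tanh x) has_real_derivative y) (at x) \<and> 0 \<le> y" by auto
  qed
  then show ?thesis by simp
qed

lemma cosh_le_exp_sq: fixes t :: real shows "cosh t \<le> exp (t^2/2)"
proof -
  have main: "cosh s \<le> exp (s^2/2)" if s: "s \<ge> 0" for s :: real
  proof -
    have "(\<lambda>x. x^2/2 - ln (cosh x)) 0 \<le> (\<lambda>x. x^2/2 - ln (cosh x)) s"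
    proof (rule DERIV_nonneg_imp_nondecreasing[OF s])
      fix x :: real assume x: "0 \<le> x" "x \<le> s"
      have c: "cosh x > 0" by (rule cosh_real_pos)
      have "((\<lambda>x. x^2/2 - ln (cosh x)) has_real_derivative x - sinh x / cosh x) (at x)"
        using c by (auto intro!: derivative_eq_intros)
      moreover have "x - sinh x / cosh x \<ge> 0" using tanh_le_self[OF x(1)] by (simp add: tanh_def)
      ultimately show "\<exists>y. ((\<lambda>x. x^2/2 - ln (cosh x)) has_real_derivative y) (at x) \<and> 0 \<le> y" by auto
    qed
    then have "ln (cosh s) \<le> s^2/2" by simp
    then show ?thesis using cosh_real_pos[of s] by (metis exp_le_cancel_iff exp_ln)
  qed
  show ?thesis
  proof (cases "t \<ge> 0")
    case True then show ?thesis by (rule main)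
  next
    case False then show ?thesis using main[of "-t"] by simp
  qed
qed

lemma exp_sum_le: fixes t :: real shows "exp (-t) + exp t \<le> 2 * exp (t^2/2)"
  using cosh_le_exp_sq[of t] by (simp add: cosh_def)

lemma exp_sum_mono: fixes s t :: real assumes "\<bar>s\<bar> \<le> \<bar>t\<bar>" shows "exp (-s) + exp s \<le> exp (-t) + exp t"
proof -
  have "cosh s \<le> cosh t" using assms cosh_real_nonneg_le_iff[of "\<bar>s\<bar>" "\<bar>t\<bar>"] by (metis abs_ge_zero cosh_real_abs)
  then show ?thesis by (simp add: cosh_def)
qed




definition G :: "real \<Rightarrow> real \<Rightarrow> real \<Rightarrow> real" where
  "G n \<sigma> x = (LBINT u=0..1. 1 / (exp (- u * n * x / \<sigma>) + exp (u * n * x / \<sigma>))\<^sup>2)"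

lemma G_measurable: "G n \<sigma> \<in> borel_measurable borel"
proof -
  have eq: "G n \<sigma> = (\<lambda>x. \<integral>u. indicator (einterval 0 1) u *\<^sub>R (1 / (exp (- u * n * x / \<sigma>) + exp (u * n * x / \<sigma>))\<^sup>2) \<partial>lborel)"
    by (rule ext) (simp add: G_def interval_lebesgue_integral_le_eq set_lebesgue_integral_def)
  show ?thesis unfolding eq by measurable
qed

lemma lbint01_mono:
  fixes f g :: "real \<Rightarrow> real"
  assumes "\<And>u. isCont f u" "\<And>u. isCont g u" "\<And>u. 0 \<le> u \<Longrightarrow> u \<le> 1 \<Longrightarrow> f u \<le> g u"
  shows "(LBINT u=0..1. f u) \<le> (LBINT u=0..1. g u)"
proof -
  have "interval_lebesgue_integrable lborel 0 1 f" "interval_lebesgue_integrable lborel 0 1 g"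
    using assms interval_integrable_isCont[of 0 1 f] interval_integrable_isCont[of 0 1 g]
    by (auto simp: zero_ereal_def one_ereal_def)
  then have i: "set_integrable lborel (einterval 0 1) f" "set_integrable lborel (einterval 0 1) g"
    by (auto simp: interval_lebesgue_integrable_def)
  show ?thesis
    apply (simp add: interval_lebesgue_integral_le_eq)
    apply (rule set_integral_mono[OF i])
    using assms(3) by (auto simp: einterval_iff)
qed




lemma D_pos: "(0::real) < exp a + exp b" by (simp add: add_pos_pos)

lemma isCont_K: fixes n x \<sigma> u :: real assumes "\<sigma> \<noteq> 0" shows "isCont (\<lambda>u. 1 / (exp (- u * n * x / \<sigma>) + exp (u * n * x / \<sigma>))\<^sup>2) u"
proof -
  have "0 < exp (- u * n * x / \<sigma>) + exp (u * n * x / \<sigma>)" by (rule D_pos)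
  then have "(exp (- u * n * x / \<sigma>) + exp (u * n * x / \<sigma>))\<^sup>2 \<noteq> 0" by simp
  then show ?thesis using assms by (intro continuous_intros) auto
qed

lemma FTC01:
  fixes f F :: "real \<Rightarrow> real"
  assumes "continuous_on {0..1} f" "\<And>x. 0 \<le> x \<Longrightarrow> x \<le> 1 \<Longrightarrow> (F has_real_derivative f x) (at x)"
  shows "(LBINT u=0..1. f u) = F 1 - F 0"
  using interval_integral_FTC_finite[of 0 1 f F] assms
  by (auto simp: zero_ereal_def one_ereal_def has_real_derivative_iff_has_vector_derivative[symmetric]
      intro: has_field_derivative_at_within)

lemma lbint01_const: "(LBINT u=0..1. (c::real)) = c"
proof -
  have d: "((\<lambda>u. c*u) has_real_derivative c) (at x)" for x
    using DERIV_cmult[OF DERIV_ident, of c x] by simp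
  have "(LBINT u=0..1. c) = (\<lambda>u. c * u) 1 - (\<lambda>u. c * u) 0"
    by (rule FTC01) (simp_all add: d)
  then show ?thesis by simp
qed

lemma G_nonneg: assumes "\<sigma> \<noteq> 0" shows "0 \<le> G n \<sigma> x"
proof -
  have "(LBINT u=0..1. (0::real)) \<le> G n \<sigma> x"
    unfolding G_def by (rule lbint01_mono[OF _ isCont_K[OF assms]]) simp_all
  then show ?thesis by (simp add: lbint01_const)
qed

lemma K_le: "1 / (exp (-b) + exp (b::real))\<^sup>2 \<le> 1/4"
proof -
  have "2 \<le> exp (-b) + exp b" using exp_sum_mono[of 0 b] by simp
  then have "2*2 \<le> (exp (-b) + exp b)^2" unfolding power2_eq_square by (intro mult_mono) auto
  then show ?thesis by (intro divide_left_mono) auto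
qed

lemma G_le: assumes "\<sigma> \<noteq> 0" shows "G n \<sigma> x \<le> 1/4"
proof -
  have "G n \<sigma> x \<le> (LBINT u=0..1. 1/4)"
    unfolding G_def
  proof (rule lbint01_mono[OF isCont_K[OF assms]])
    fix u :: real
    have "- u * n * x / \<sigma> = - (u * n * x / \<sigma>)" by simp
    then show "1 / (exp (- u * n * x / \<sigma>) + exp (u * n * x / \<sigma>))\<^sup>2 \<le> 1/4"
      using K_le[of "u * n * x / \<sigma>"] by metis
  qed simp
  then show ?thesis by (simp add: lbint01_const)
qed




lemma G_mono:
  fixes n \<sigma> x x' :: real
  assumes "\<sigma> > 0" "n \<ge> 0" "\<bar>x\<bar> \<le> \<bar>x'\<bar>"
  shows "G n \<sigma> x' \<le> G n \<sigma> x"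
  unfolding G_def
proof (rule lbint01_mono[OF isCont_K isCont_K])
  fix u :: real assume u: "0 \<le> u" "u \<le> 1"
  define s where "s = u * n * x / \<sigma>"
  define t where "t = u * n * x' / \<sigma>"
  have "\<bar>s\<bar> = u * n * \<bar>x\<bar> / \<sigma>" "\<bar>t\<bar> = u * n * \<bar>x'\<bar> / \<sigma>"
    using u assms by (simp_all add: s_def t_def abs_mult abs_divide)
  then have "\<bar>s\<bar> \<le> \<bar>t\<bar>" using u assms
    by (simp add: divide_right_mono mult_left_mono)
  then have le: "exp (-s) + exp s \<le> exp (-t) + exp t" by (rule exp_sum_mono)
  have p: "0 < exp (-s) + exp s" by (rule D_pos)
  have "(exp (-s) + exp s)^2 \<le> (exp (-t) + exp t)^2" using le p by (intro power_mono) auto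
  then have "1 / (exp (-t) + exp t)^2 \<le> 1 / (exp (-s) + exp s)^2"
    using p by (intro divide_left_mono) auto
  moreover have "- u * n * x / \<sigma> = -s" "- u * n * x' / \<sigma> = -t" by (simp_all add: s_def t_def)
  ultimately show "1 / (exp (- u * n * x' / \<sigma>) + exp (u * n * x' / \<sigma>))\<^sup>2
      \<le> 1 / (exp (- u * n * x / \<sigma>) + exp (u * n * x / \<sigma>))\<^sup>2"
    by (simp add: s_def t_def)
qed (use assms in auto)

lemma K_lower:
  fixes t y :: real
  shows "exp (- (y^2) / 3) * (1 - t^2 + y^2/3) / 4 \<le> 1 / (exp (-t) + exp t)^2"
proof -
  have D: "exp (-t) + exp t \<le> 2 * exp (t^2/2)" by (rule exp_sum_le)
  have p: "0 < exp (-t) + exp t" by (rule D_pos)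
  have "(exp (-t) + exp t)^2 \<le> (2 * exp (t^2/2))^2" using D p by (intro power_mono) auto
  also have "\<dots> = 4 * exp (t^2)" by (simp add: power2_eq_square exp_add[symmetric])
  finally have "1 / (4 * exp (t^2)) \<le> 1 / (exp (-t) + exp t)^2"
    using p by (intro divide_left_mono) auto
  moreover have "1 / (4 * exp (t^2)) = exp (- (t^2)) / 4" by (simp add: exp_minus field_simps)
  moreover have "exp (- (y^2) / 3) * (1 - t^2 + y^2/3) / 4 \<le> exp (- (t^2)) / 4"
  proof (rule divide_right_mono[OF _ zero_le_numeral])
    have "exp (- (y^2) / 3) * (1 + (- (t^2) + y^2/3)) \<le> exp (- (y^2) / 3) * exp (- (t^2) + y^2/3)"
      by (intro mult_left_mono exp_ge_add_one_self) auto
    also have "\<dots> = exp (- (t^2))" by (simp add: exp_add[symmetric])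
    finally show "exp (- (y^2) / 3) * (1 - t^2 + y^2/3) \<le> exp (- (t^2))" by (simp only: diff_conv_add_uminus add.assoc)
  qed
  ultimately show ?thesis by linarith
qed

lemma G_lower:
  fixes n \<sigma> x :: real
  assumes "\<sigma> \<noteq> 0"
  shows "exp (- ((n*x/\<sigma>)^2) / 3) / 4 \<le> G n \<sigma> x"
proof -
  define y where "y = n*x/\<sigma>"
  define p where "p u = exp (- (y^2) / 3) * (1 - (u*y)^2 + y^2/3) / 4" for u
  define F where "F u = exp (- (y^2) / 3) / 4 * ((1 + y^2/3) * u - y^2 * u^3 / 3)" for u
  have "(LBINT u=0..1. p u) = F 1 - F 0"
  proof (rule FTC01)
    show "continuous_on {0..1} p" unfolding p_def by (intro continuous_intros) auto
    fix x :: real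
    show "(F has_real_derivative p x) (at x)" unfolding F_def p_def
      by (rule derivative_eq_intros refl | simp)+ (simp add: power2_eq_square field_simps)
  qed
  also have "\<dots> = exp (- (y^2) / 3) / 4" by (simp add: F_def field_simps)
  finally have eq: "(LBINT u=0..1. p u) = exp (- (y^2) / 3) / 4" .
  have "(LBINT u=0..1. p u) \<le> G n \<sigma> x"
    unfolding G_def
  proof (rule lbint01_mono[OF _ isCont_K[OF assms]])
    show "isCont p u" for u unfolding p_def by (intro continuous_intros) auto
    fix u :: real
    have "- u * n * x / \<sigma> = - (u*y)" "u * n * x / \<sigma> = u*y" by (simp_all add: y_def)
    then show "p u \<le> 1 / (exp (- u * n * x / \<sigma>) + exp (u * n * x / \<sigma>))\<^sup>2"
      unfolding p_def using K_lower[of y "u*y"] by simp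
  qed
  then show ?thesis using eq by (simp add: y_def)
qed




abbreviation "N \<equiv> std_normal_measure"

lemma N_prob: "prob_space N"
proof -
  have "prob_space (density lborel (\<lambda>x. ennreal (normal_density 0 1 x)))"
    by (rule prob_spaceI) (simp add: emeasure_density nn_integral_eq_integral)
  then show ?thesis unfolding std_normal_measure_def .
qed

lemma sets_N[measurable_cong]: "sets N = sets borel"
  by (simp add: std_normal_measure_def)

lemma space_N: "space N = UNIV"
  by (simp add: std_normal_measure_def)

lemma meas_N: "measurable N M = measurable borel M"
  by (rule measurable_cong_sets) (simp_all add: sets_N)

lemma integral_N:
  assumes "f \<in> borel_measurable borel"
  shows "integral\<^sup>L N f = (\<integral>x. std_normal_density x * f x \<partial>lborel)"
  unfolding std_normal_measure_def using assms
  by (subst integral_density) auto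

lemma integrable_N:
  assumes "f \<in> borel_measurable borel"
  shows "integrable N f \<longleftrightarrow> integrable lborel (\<lambda>x. std_normal_density x * f x)"
  unfolding std_normal_measure_def using assms
  by (subst integrable_density) auto

lemma int_N_sq: "integrable N (\<lambda>x. x * x)" "integral\<^sup>L N (\<lambda>x. x * x) = 1"
proof -
  have h: "has_bochner_integral lborel (\<lambda>x. std_normal_density x * x^2) 1"
    using std_normal_moment_even[of 1] by simp
  have m: "(\<lambda>x::real. x * x) \<in> borel_measurable borel" by measurable
  show "integrable N (\<lambda>x. x * x)" using h m by (simp add: integrable_N power2_eq_square has_bochner_integral_iff)
  show "integral\<^sup>L N (\<lambda>x. x * x) = 1" using h m by (simp add: integral_N power2_eq_square has_bochner_integral_iff)
qed

lemma N_measure: "measure N (space N) = 1"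
  using N_prob prob_space.prob_space by blast

lemma int_N_const: "integrable N (\<lambda>x. c::real)" "integral\<^sup>L N (\<lambda>x. c::real) = c"
proof -
  interpret prob_space N by (rule N_prob)
  show "integrable N (\<lambda>x. c::real)" by (simp add: prob_space)
  show "integral\<^sup>L N (\<lambda>x. c::real) = c" by (simp add: prob_space)
qed

lemma G_meas_N: "G n \<sigma> \<in> borel_measurable N"
  using G_measurable by (simp add: meas_N)

lemma int_N_G: assumes "\<sigma> \<noteq> 0" shows "integrable N (G n \<sigma>)"
proof (rule Bochner_Integration.integrable_bound[OF int_N_const(1)[of 1] G_meas_N])
  show "AE x in N. norm (G n \<sigma> x) \<le> norm (1::real)"
  proof (rule AE_I2)
    fix x
    show "norm (G n \<sigma> x) \<le> norm (1::real)" using G_nonneg[OF assms, of n x] G_le[OF assms, of n x] by simp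
  qed
qed

lemma int_N_sqG: assumes "\<sigma> \<noteq> 0" shows "integrable N (\<lambda>x. x * x * G n \<sigma> x)"
proof (rule Bochner_Integration.integrable_bound[OF int_N_sq(1)])
  show "(\<lambda>x. x * x * G n \<sigma> x) \<in> borel_measurable N" using G_meas_N by measurable
  show "AE x in N. norm (x * x * G n \<sigma> x) \<le> norm (x * x)"
  proof (rule AE_I2)
    fix x :: real
    have "x * x * G n \<sigma> x \<le> x * x * 1" using G_le[OF assms, of n x]
      by (intro mult_left_mono) auto
    then show "norm (x * x * G n \<sigma> x) \<le> norm (x * x)"
      using G_nonneg[OF assms, of n x] by (simp add: abs_mult)
  qed
qed




lemma gauss_weighted:
  fixes a :: real
  assumes a: "a \<ge> 0"
  defines "s \<equiv> 1 / sqrt (1 + 2*a)"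
  shows "has_bochner_integral lborel (\<lambda>x. std_normal_density x * (x * x * exp (- (a * x^2)))) (s^3)"
proof -
  have q: "1 + 2*a > 0" using a by simp
  have spos: "s > 0" unfolding s_def using q by simp
  have s2: "s^2 = 1 / (1 + 2*a)" unfolding s_def using q by (simp add: power_divide)
  have pt: "std_normal_density x * (x * x * exp (- (a * x^2))) = s * (normal_density 0 s x * (x - 0)^(2*1))" for x
  proof -
    have "sqrt (2 * pi * s^2) = sqrt (2*pi) * s" using spos by (simp add: real_sqrt_mult)
    moreover have "- (x - 0)\<^sup>2 / (2 * s\<^sup>2) = - x\<^sup>2/2 + - (a * x^2)" using q by (simp add: s2 field_simps)
    ultimately have "normal_density 0 s x = 1 / (sqrt (2*pi) * s) * (exp (- x\<^sup>2/2) * exp (- (a * x^2)))"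
      by (simp add: normal_density_def exp_add[symmetric])
    then show ?thesis using spos by (simp add: std_normal_density_def power2_eq_square field_simps)
  qed
  have "has_bochner_integral lborel (\<lambda>x. s * (normal_density 0 s x * (x - 0)^(2*1))) (s * (fact (2 * 1) / ((2 / s\<^sup>2)^1 * fact 1)))"
    by (rule has_bochner_integral_mult_right) (rule normal_moment_even, rule spos)
  moreover have "s * (fact (2 * 1) / ((2 / s\<^sup>2)^1 * fact 1)) = s^3"
    using spos by (simp add: power2_eq_square power3_eq_cube)
  ultimately show ?thesis by (simp only: pt)
qed

lemma I1:
  assumes "\<sigma> \<noteq> 0" "\<sigma> > 0" "n \<ge> 0"
  shows "integral\<^sup>L N (\<lambda>x. x * x * G n \<sigma> x) \<le> integral\<^sup>L N (G n \<sigma>)"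
proof -
  define c where "c = G n \<sigma> 1"
  have i1: "integrable N (\<lambda>x. 1 - x * x)" using int_N_const(1) int_N_sq(1) by (rule Bochner_Integration.integrable_diff)
  have z: "integral\<^sup>L N (\<lambda>x. 1 - x * x) = 0"
    by (simp add: Bochner_Integration.integral_diff[OF int_N_const(1) int_N_sq(1)] int_N_const(2)[of 1] int_N_sq(2) N_measure)
  have "integral\<^sup>L N (\<lambda>x. (1 - x * x) * c) \<le> integral\<^sup>L N (\<lambda>x. G n \<sigma> x - x * x * G n \<sigma> x)"
  proof (rule integral_mono)
    show "integrable N (\<lambda>x. (1 - x * x) * c)" using i1 by simp
    show "integrable N (\<lambda>x. G n \<sigma> x - x * x * G n \<sigma> x)"
      using int_N_G[OF assms(1)] int_N_sqG[OF assms(1)] by (rule Bochner_Integration.integrable_diff)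
    fix x :: real
    show "(1 - x * x) * c \<le> G n \<sigma> x - x * x * G n \<sigma> x"
    proof (cases "\<bar>x\<bar> \<le> 1")
      case True
      then have "c \<le> G n \<sigma> x" unfolding c_def using G_mono[OF assms(2,3), of x 1] by simp
      moreover have "0 \<le> 1 - x * x" using True by (metis abs_le_square_iff abs_one diff_ge_0_iff_ge mult_1 power2_eq_square)
      ultimately have "(1 - x * x) * c \<le> (1 - x * x) * G n \<sigma> x" by (intro mult_left_mono)
      then show ?thesis by (simp add: algebra_simps)
    next
      case False
      then have "G n \<sigma> x \<le> c" unfolding c_def using G_mono[OF assms(2,3), of 1 x] by simp
      moreover have "1 - x * x \<le> 0" using False by (metis abs_le_square_iff abs_one diff_le_0_iff_le linear mult_1 power2_eq_square)
      ultimately have "(1 - x * x) * c \<le> (1 - x * x) * G n \<sigma> x" by (intro mult_left_mono_neg)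
      then show ?thesis by (simp add: algebra_simps)
    qed
  qed
  moreover have "integral\<^sup>L N (\<lambda>x. (1 - x * x) * c) = 0" using z by simp
  moreover have "integral\<^sup>L N (\<lambda>x. G n \<sigma> x - x * x * G n \<sigma> x) = integral\<^sup>L N (G n \<sigma>) - integral\<^sup>L N (\<lambda>x. x * x * G n \<sigma> x)"
    by (rule Bochner_Integration.integral_diff[OF int_N_G[OF assms(1)] int_N_sqG[OF assms(1)]])
  ultimately show ?thesis using z by simp
qed




lemma cubic_aux:
  fixes r :: real assumes "r \<ge> 1" "r^2 \<le> 17/12"
  shows "r^3 \<le> 3 * r^2 - 2"
proof -
  have "r^2 - 2*r - 2 \<le> 0" using assms by simp
  then have "(r - 1) * (r^2 - 2*r - 2) \<le> 0" using assms by (intro mult_nonneg_nonpos) auto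
  then show ?thesis by (simp add: algebra_simps power2_eq_square power3_eq_cube)
qed

lemma I2:
  fixes n \<sigma> :: real
  assumes sp: "\<sigma> > 0" and n: "n\<^sup>2 \<le> 5 * \<sigma>\<^sup>2 / 8"
  shows "1 / (4 * (1 + 2 * n\<^sup>2 / \<sigma>\<^sup>2)) \<le> integral\<^sup>L N (\<lambda>x. x * x * G n \<sigma> x)"
proof -
  have s0: "\<sigma> \<noteq> 0" using sp by simp
  define a where "a = (n/\<sigma>)^2/3"
  have a0: "a \<ge> 0" unfolding a_def by simp
  define r where "r = sqrt (1 + 2*a)"
  have r1: "r \<ge> 1" unfolding r_def using a0 by simp
  have r2: "r^2 = 1 + 2*a" unfolding r_def using a0 by simp
  have b: "(n/\<sigma>)^2 \<le> 5/8" using n sp by (simp add: power_divide field_simps)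
  have r3: "r^2 \<le> 17/12" using r2 b unfolding a_def by simp
  have cub: "r^3 \<le> 3 * r^2 - 2" by (rule cubic_aux[OF r1 r3])
  define L where "L x = x * x * (exp (- ((n*x/\<sigma>)^2) / 3) / 4)" for x
  have Lm: "L \<in> borel_measurable borel" unfolding L_def by measurable
  have Leq: "std_normal_density x * L x = (std_normal_density x * (x * x * exp (- (a * x^2)))) / 4" for x
  proof -
    have "- ((n*x/\<sigma>)^2) / 3 = - (a * x^2)" unfolding a_def by (simp add: power_mult_distrib power_divide field_simps)
    then show ?thesis unfolding L_def by simp
  qed
  have hb: "has_bochner_integral lborel (\<lambda>x. std_normal_density x * L x) ((1 / sqrt (1 + 2*a))^3 / 4)"
    unfolding Leq by (rule has_bochner_integral_divide_zero) (rule gauss_weighted[OF a0])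
  have iL: "integrable N L" using Lm hb by (simp add: integrable_N has_bochner_integral_iff)
  have vL: "integral\<^sup>L N L = (1/r)^3 / 4" using Lm hb by (simp add: integral_N has_bochner_integral_iff r_def)
  have "integral\<^sup>L N L \<le> integral\<^sup>L N (\<lambda>x. x * x * G n \<sigma> x)"
  proof (rule integral_mono[OF iL int_N_sqG[OF s0]])
    fix x :: real
    show "L x \<le> x * x * G n \<sigma> x" unfolding L_def
      by (rule mult_left_mono[OF G_lower[OF s0]]) simp
  qed
  moreover have "1 / (4 * (1 + 2 * n\<^sup>2 / \<sigma>\<^sup>2)) \<le> (1/r)^3 / 4"
  proof -
    have e: "1 + 2 * n\<^sup>2 / \<sigma>\<^sup>2 = 3 * r^2 - 2" using r2 unfolding a_def by (simp add: power_divide)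
    have p: "0 < r^3" using r1 by simp
    have "1 / (3 * r^2 - 2) \<le> 1 / r^3" using cub p a0 by (intro divide_left_mono) (auto intro!: mult_pos_pos simp: r2)
    then have "1 / (3 * r^2 - 2) / 4 \<le> 1 / r^3 / 4" by (rule divide_right_mono) simp
    moreover have "1 / (4 * (3 * r^2 - 2)) = 1 / (3 * r^2 - 2) / 4" by simp
    moreover have "(1/r)^3 / 4 = 1 / r^3 / 4" by (simp add: power_one_over)
    ultimately show ?thesis unfolding e by metis
  qed
  ultimately show ?thesis using vL by simp
qed




lemma F_entry_G:
  "F_entry d \<sigma> \<theta> j j = (\<integral>V. V j * V j * G (norm_d d \<theta>) \<sigma> (V 0) \<partial>gauss_d d)"
  unfolding F_entry_def G_def
proof (rule Bochner_Integration.integral_cong[OF refl])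
  fix V :: "nat \<Rightarrow> real"
  have "(\<lambda>u. V j * V j / (exp (- u * norm_d d \<theta> * V 0 / \<sigma>) + exp (u * norm_d d \<theta> * V 0 / \<sigma>))\<^sup>2)
      = (\<lambda>u. V j * V j * (1 / (exp (- u * norm_d d \<theta> * V 0 / \<sigma>) + exp (u * norm_d d \<theta> * V 0 / \<sigma>))\<^sup>2))"
    by simp
  then show "(LBINT u=0..1. V j * V j / (exp (- u * norm_d d \<theta> * V 0 / \<sigma>) + exp (u * norm_d d \<theta> * V 0 / \<sigma>))\<^sup>2)
      = V j * V j * (LBINT u=0..1. 1 / (exp (- u * norm_d d \<theta> * V 0 / \<sigma>) + exp (u * norm_d d \<theta> * V 0 / \<sigma>))\<^sup>2)"
    by (simp only: interval_lebesgue_integral_mult_right)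
qed

lemma prod_two:
  fixes g :: "nat \<Rightarrow> real"
  assumes "j \<noteq> 0" "j < d" "\<And>i. i \<noteq> 0 \<Longrightarrow> i \<noteq> j \<Longrightarrow> g i = 1"
  shows "prod g {..<d} = g 0 * g j"
proof -
  have "prod g {..<d} = prod g {0, j}"
    by (rule prod.mono_neutral_right) (use assms in auto)
  then show ?thesis using assms by simp
qed

lemma prod_one:
  fixes g :: "nat \<Rightarrow> real"
  assumes "0 < d" "\<And>i. i \<noteq> 0 \<Longrightarrow> g i = 1"
  shows "prod g {..<d} = g 0"
proof -
  have "prod g {..<d} = prod g {0}"
    by (rule prod.mono_neutral_right) (use assms in auto)
  then show ?thesis by simp
qed

lemma PS: "product_sigma_finite (\<lambda>_::nat. N)"
  unfolding product_sigma_finite_def using prob_space_imp_sigma_finite[OF N_prob] by simp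

lemma F_jj:
  assumes "\<sigma> \<noteq> 0" "j \<noteq> 0" "j < d"
  shows "F_entry d \<sigma> \<theta> j j = integral\<^sup>L N (G (norm_d d \<theta>) \<sigma>)"
proof -
  define n where "n = norm_d d \<theta>"
  define f where "f i = (if i = 0 then G n \<sigma> else if i = j then (\<lambda>x::real. x * x) else (\<lambda>x. 1))" for i
  have "F_entry d \<sigma> \<theta> j j = (\<integral>V. (\<Prod>i\<in>{..<d}. f i (V i)) \<partial>gauss_d d)"
    unfolding F_entry_G n_def[symmetric]
  proof (rule Bochner_Integration.integral_cong[OF refl])
    fix V :: "nat \<Rightarrow> real"
    have "(\<Prod>i\<in>{..<d}. f i (V i)) = f 0 (V 0) * f j (V j)"
      by (rule prod_two[OF assms(2,3)]) (simp add: f_def)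
    then show "V j * V j * G n \<sigma> (V 0) = (\<Prod>i\<in>{..<d}. f i (V i))"
      using assms by (simp add: f_def)
  qed
  also have "\<dots> = (\<Prod>i\<in>{..<d}. integral\<^sup>L N (f i))"
    unfolding gauss_d_def
    by (rule product_sigma_finite.product_integral_prod[OF PS])
       (auto simp: f_def int_N_G[OF assms(1)] int_N_sq int_N_const)
  also have "\<dots> = integral\<^sup>L N (f 0) * integral\<^sup>L N (f j)"
    by (rule prod_two[OF assms(2,3)]) (simp add: f_def int_N_const N_measure)
  also have "\<dots> = integral\<^sup>L N (G n \<sigma>)"
    using assms by (simp add: f_def int_N_sq)
  finally show ?thesis unfolding n_def .
qed

lemma F_00:
  assumes "\<sigma> \<noteq> 0" "0 < d"
  shows "F_entry d \<sigma> \<theta> 0 0 = integral\<^sup>L N (\<lambda>x. x * x * G (norm_d d \<theta>) \<sigma> x)"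
proof -
  define n where "n = norm_d d \<theta>"
  define f where "f i = (if i = 0 then (\<lambda>x. x * x * G n \<sigma> x) else (\<lambda>x::real. 1))" for i :: nat
  have "F_entry d \<sigma> \<theta> 0 0 = (\<integral>V. (\<Prod>i\<in>{..<d}. f i (V i)) \<partial>gauss_d d)"
    unfolding F_entry_G n_def[symmetric]
  proof (rule Bochner_Integration.integral_cong[OF refl])
    fix V :: "nat \<Rightarrow> real"
    have "(\<Prod>i\<in>{..<d}. f i (V i)) = f 0 (V 0)"
      by (rule prod_one[OF assms(2)]) (simp add: f_def)
    then show "V 0 * V 0 * G n \<sigma> (V 0) = (\<Prod>i\<in>{..<d}. f i (V i))"
      by (simp add: f_def)
  qed
  also have "\<dots> = (\<Prod>i\<in>{..<d}. integral\<^sup>L N (f i))"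
    unfolding gauss_d_def
    by (rule product_sigma_finite.product_integral_prod[OF PS])
       (auto simp: f_def int_N_sqG[OF assms(1)] int_N_const N_measure)
  also have "\<dots> = integral\<^sup>L N (f 0)"
    by (rule prod_one[OF assms(2)]) (simp add: f_def int_N_const N_measure)
  finally show ?thesis unfolding n_def f_def by simp
qed

theorem lemma3:
  fixes d :: nat and \<sigma> :: real and \<theta> :: "nat \<Rightarrow> real" and j :: nat
  assumes "d \<ge> 1" and "\<sigma> > 0"
    and "(norm_d d \<theta>)\<^sup>2 \<le> 5 * \<sigma>\<^sup>2 / 8"
    and "j < d"
  shows "F_entry d \<sigma> \<theta> j j \<ge> F_entry d \<sigma> \<theta> 0 0
       \<and> F_entry d \<sigma> \<theta> 0 0 \<ge> 1 / (4 * (1 + 2 * (norm_d d \<theta>)\<^sup>2 / \<sigma>\<^sup>2))"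
proof -
  have s0: "\<sigma> \<noteq> 0" using assms by simp
  have d0: "0 < d" using assms by simp
  have n0: "norm_d d \<theta> \<ge> 0" unfolding norm_d_def by (simp add: sum_nonneg)
  have F0: "F_entry d \<sigma> \<theta> 0 0 = integral\<^sup>L N (\<lambda>x. x * x * G (norm_d d \<theta>) \<sigma> x)"
    by (rule F_00[OF s0 d0])
  have A: "F_entry d \<sigma> \<theta> j j \<ge> F_entry d \<sigma> \<theta> 0 0"
  proof (cases "j = 0")
    case True then show ?thesis by simp
  next
    case False
    show ?thesis unfolding F0 F_jj[OF s0 False assms(4)]
      by (rule I1[OF s0 assms(2) n0])
  qed
  have B: "F_entry d \<sigma> \<theta> 0 0 \<ge> 1 / (4 * (1 + 2 * (norm_d d \<theta>)\<^sup>2 / \<sigma>\<^sup>2))"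
    unfolding F0 by (rule I2[OF assms(2) assms(3)])
  show ?thesis using A B by simp
qed


end
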